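(* Let $P>0$ and $p_B\in[0,1)$. For each integer $L\geq 1$, let $\beta_1,\ldots,\beta_L$ be i.i.d. with $\mathbb{P}(\beta_l=0)=p_B$, $\mathbb{P}(\beta_l=1)=1-p_B$, let $\theta_1,\ldots,\theta_L$ be i.i.d. $\mathrm{Uniform}(0,2\pi)$ independent of the $\beta_l$, let $h:=\sum_{l=1}^L\beta_le^{j\theta_l}$, and define $R(L):=\mathbb{E}[\log(1+|h|^2P)]$. Then: (i) $R(L)\geq (1-p_B^L)\log(1+P)$ for all $L\geq1$; (ii) $R(L)$ is a strictly increasing sequence in $L$; (iii) $\lim_{L\to\infty}R(L)=\infty$.
   Context: $R(L)$ is the ergodic rate of non-coherent joint transmission (the same scalar Gaussian codeword of power $P$ sent by all $L$ transmitters) over a multi-point intermittent block fading channel with blockage probability $p_B$ and independent uniform phase offsets. $\log$ is the logarithm in a fixed base. *)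

theory Defs
  imports "HOL-Probability.Probability"
begin

text \<open>Distribution of one transmitter: blockage indicator beta (True = unblocked, i.e. beta = 1,
  with probability 1 - pB) and an independent phase theta uniform on [0, 2 pi].\<close>
definition tx_measure :: "real \<Rightarrow> (bool \<times> real) measure" where
  "tx_measure pB = measure_pmf (bernoulli_pmf (1 - pB)) \<Otimes>\<^sub>M uniform_measure lborel {0..2*pi}"

definition chan :: "nat \<Rightarrow> (nat \<Rightarrow> bool \<times> real) \<Rightarrow> complex" where
  "chan L \<omega> = (\<Sum>l<L. of_bool (fst (\<omega> l)) * cis (snd (\<omega> l)))"

definition rate :: "real \<Rightarrow> real \<Rightarrow> real \<Rightarrow> nat \<Rightarrow> real" where
  "rate b P pB L = (\<integral>\<omega>. log b (1 + (cmod (chan L \<omega>))\<^sup>2 * P) \<partial>(\<Pi>\<^sub>M l\<in>{..<L}. tx_measure pB))"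

end

theory Submission
  imports Defs "HOL-Complex_Analysis.Complex_Analysis"
begin


abbreviation "U \<equiv> uniform_measure lborel {0..2*pi}"

lemma U_density: "U = density lborel (\<lambda>x. ennreal (indicator {0..2*pi} x / (2*pi)))"
proof -
  have em: "emeasure lborel {0..2*pi} = ennreal (2*pi)" by simp
  show ?thesis unfolding uniform_measure_def em
    by (intro density_cong) (auto simp: divide_ennreal ennreal_indicator[symmetric])
qed

lemma prob_U: "prob_space U"
  by (rule prob_space_uniform_measure) auto

lemma U_integral:
  fixes f :: "real \<Rightarrow> real"
  assumes "continuous_on UNIV f"
  shows "(\<integral>\<theta>. f \<theta> \<partial>U) = integral {0..2*pi} f / (2*pi)"
proof -
  have fm: "f \<in> borel_measurable borel"
    by (rule borel_measurable_continuous_onI[OF assms])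
  have "(\<integral>\<theta>. f \<theta> \<partial>U) = (\<integral>x. (indicator {0..2*pi} x / (2*pi)) *\<^sub>R f x \<partial>lborel)"
    unfolding U_density by (rule integral_density) (auto simp: fm)
  also have "\<dots> = (\<integral>x. indicator {0..2*pi} x *\<^sub>R f x \<partial>lborel) / (2*pi)"
  proof -
    have "(\<lambda>x. (indicator {0..2*pi} x / (2*pi)) *\<^sub>R f x) = (\<lambda>x. (indicator {0..2*pi} x *\<^sub>R f x) / (2*pi))"
      by (auto simp: fun_eq_iff)
    then show ?thesis by (simp only: integral_divide_zero)
  qed
  also have "(\<integral>x. indicator {0..2*pi} x *\<^sub>R f x \<partial>lborel) = integral {0..2*pi} f"
  proof -
    have si: "set_integrable lborel {0..2*pi} f"
      unfolding set_integrable_def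
      by (rule borel_integrable_compact) (auto intro: continuous_on_subset[OF assms])
    show ?thesis using set_borel_integral_eq_integral(2)[OF si] by (simp add: set_lebesgue_integral_def)
  qed
  finally show ?thesis .
qed

lemma mv01:
  fixes w :: complex
  assumes w: "cmod w < 1"
  shows "((\<lambda>t. ln (cmod (1 + w * exp (2 * of_real pi * \<i> * of_real t)))) has_integral 0) {0..1}"
proof -
  define f where "f = (\<lambda>z. Ln (1 + w * z))"
  have nz: "1 + w * z \<notin> \<real>\<^sub>\<le>\<^sub>0" if "cmod z \<le> 1" for z
  proof -
    have "cmod (w * z) < 1" using w that
      by (metis mult_le_one norm_ge_zero norm_mult order_le_less_trans mult_left_le le_less_trans)
    then have "Re (w*z) > -1" using abs_Re_le_cmod[of "w*z"] by linarith
    then have "Re (1 + w*z) > 0" by simp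
    then show ?thesis by (auto simp: complex_nonpos_Reals_iff)
  qed
  have holo: "f holomorphic_on cball 0 1"
    unfolding f_def by (intro holomorphic_on_Ln' holomorphic_intros) (auto intro!: nz)
  have "((\<lambda>u. f u / (u - 0)) has_contour_integral (2 * of_real pi * \<i> * f 0)) (circlepath 0 1)"
    by (rule Cauchy_integral_circlepath_simple[OF holo]) simp
  then have "((\<lambda>u. f u / u) has_contour_integral 0) (circlepath 0 1)"
    by (simp add: f_def)
  then have h1: "((\<lambda>x. f (exp (2 * of_real pi * \<i> * of_real x)) / exp (2 * of_real pi * \<i> * of_real x)
      * vector_derivative (circlepath 0 1) (at x within {0..1})) has_integral 0) {0..1}"
    unfolding has_contour_integral_def by (simp add: circlepath)
  have h2: "((\<lambda>x. (2 * of_real pi * \<i>) * f (exp (2 * of_real pi * \<i> * of_real x))) has_integral 0) {0..1}"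
    apply (rule has_integral_eq[OF _ h1])
    by (simp add: vector_derivative_circlepath01)
  have h3: "((\<lambda>x. f (exp (2 * of_real pi * \<i> * of_real x))) has_integral 0) {0..1}"
    using has_integral_mult_right[OF h2, of "1 / (2 * of_real pi * \<i>)"] by simp
  have h4: "((\<lambda>x. Re (f (exp (2 * of_real pi * \<i> * of_real x)))) has_integral 0) {0..1}"
    using has_integral_linear[OF h3 bounded_linear_Re] by (simp only: o_def zero_complex.sel)
  show ?thesis
  proof (rule has_integral_eq[OF _ h4])
    fix x :: real
    let ?z = "1 + w * exp (2 * of_real pi * \<i> * of_real x)"
    have "cmod (exp (2 * of_real pi * \<i> * of_real x)) \<le> 1"
      by (simp only: norm_exp_eq_Re) simp
    then have "?z \<notin> \<real>\<^sub>\<le>\<^sub>0" by (rule nz)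
    then have "?z \<noteq> 0" by auto
    then show "Re (f (exp (2 * of_real pi * \<i> * of_real x))) = ln (cmod ?z)"
      unfolding f_def by (rule Re_Ln)
  qed
qed

lemma img2pi: "(\<lambda>x. x / (1 / (2*pi))) ` {0..1} = {0..2*pi}"
proof -
  have "y \<in> (\<lambda>x. x / (1 / (2*pi))) ` {0..1}" if "0 \<le> y" "y \<le> 2*pi" for y
  proof
    show "y = (y/(2*pi)) / (1 / (2*pi))" by simp
    show "y/(2*pi) \<in> {0..1}" using that by (auto simp: field_simps)
  qed
  then show ?thesis by auto
qed

lemma mv:
  fixes w :: complex
  assumes w: "cmod w < 1"
  shows "((\<lambda>t. ln (cmod (1 + w * cis t))) has_integral 0) {0..2*pi}"
proof -
  let ?g = "\<lambda>t. ln (cmod (1 + w * exp (2 * of_real pi * \<i> * of_real t)))"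
  have "(?g has_integral (\<bar>1 / (2*pi)\<bar> *\<^sub>R 0)) {0..1}"
    using mv01[OF w] by simp
  then have h: "((\<lambda>x. ?g ((1 / (2*pi)) * x)) has_integral 0) {0..2*pi}"
    using has_integral_stretch_real_iff[of "1 / (2*pi)" ?g 0 0 1] img2pi by simp
  have e: "exp (2 * complex_of_real pi * \<i> * complex_of_real ((1 / (2 * pi)) * x)) = cis x" for x
  proof -
    have "2 * complex_of_real pi * \<i> * complex_of_real ((1 / (2 * pi)) * x) = \<i> * complex_of_real x"
      by (simp add: of_real_divide)
    then show ?thesis by (simp add: cis_conv_exp)
  qed
  show ?thesis using h unfolding e .
qed



lemma prob_T: assumes "0 \<le> pB" "pB \<le> 1" shows "prob_space (tx_measure pB)"
  unfolding tx_measure_def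
  by (intro prob_space_pair prob_space_measure_pmf prob_U)

lemma prob_M: assumes "0 \<le> pB" "pB \<le> 1" shows "prob_space (\<Pi>\<^sub>M l\<in>{..<L}. tx_measure pB)"
  by (intro prob_space_PiM prob_T assms)

lemma T_meas: "(\<lambda>x. of_bool (fst x) * cis (snd x) :: complex) \<in> borel_measurable (tx_measure pB)"
proof -
  have [measurable]: "cis \<in> borel_measurable borel"
    by (intro borel_measurable_continuous_onI continuous_on_cis continuous_on_id)
  show ?thesis unfolding tx_measure_def by measurable
qed

lemma chan_meas: "chan L \<in> borel_measurable (\<Pi>\<^sub>M l\<in>{..<L}. tx_measure pB)"
proof -
  have "(\<lambda>om. of_bool (fst (om l)) * cis (snd (om l)) :: complex) \<in> borel_measurable (\<Pi>\<^sub>M l\<in>{..<L}. tx_measure pB)"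
    if "l \<in> {..<L}" for l
    using measurable_comp[OF measurable_component_singleton[OF that] T_meas] by (simp add: comp_def)
  then show ?thesis unfolding chan_def by (intro borel_measurable_sum) auto
qed

lemma chan_bound: "cmod (chan L om) \<le> real L"
proof -
  have "cmod (chan L om) \<le> (\<Sum>l<L. cmod (of_bool (fst (om l)) * cis (snd (om l))))"
    unfolding chan_def by (rule norm_sum)
  also have "\<dots> \<le> (\<Sum>l<L. 1)" by (intro sum_mono) (auto simp: norm_mult)
  finally show ?thesis by simp
qed

lemma cont_bound:
  fixes \<phi> :: "complex \<Rightarrow> real"
  assumes "continuous_on UNIV \<phi>"
  shows "\<exists>B. \<forall>z. cmod z \<le> R \<longrightarrow> \<bar>\<phi> z\<bar> \<le> B"
proof -
  have "bounded (\<phi> ` cball 0 R)"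
    by (intro compact_imp_bounded compact_continuous_image continuous_on_subset[OF assms]) auto
  then obtain B where B: "\<forall>x\<in>\<phi> ` cball 0 R. norm x \<le> B" by (auto simp: bounded_iff)
  show ?thesis
  proof (intro exI allI impI)
    fix z :: complex assume "cmod z \<le> R"
    then have "z \<in> cball 0 R" by simp
    then show "\<bar>\<phi> z\<bar> \<le> B" using B by auto
  qed
qed

lemma integrable_phi_chan:
  fixes \<phi> :: "complex \<Rightarrow> real"
  assumes "continuous_on UNIV \<phi>" "0 \<le> pB" "pB \<le> 1"
  shows "integrable (\<Pi>\<^sub>M l\<in>{..<L}. tx_measure pB) (\<lambda>om. \<phi> (chan L om))"
proof -
  interpret prob_space "\<Pi>\<^sub>M l\<in>{..<L}. tx_measure pB" by (rule prob_M[OF assms(2,3)])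
  obtain B where B: "\<forall>z. cmod z \<le> real L \<longrightarrow> \<bar>\<phi> z\<bar> \<le> B" using cont_bound[OF assms(1)] by blast
  show ?thesis
  proof (rule integrable_const_bound[where B=B])
    show "AE x in \<Pi>\<^sub>M l\<in>{..<L}. tx_measure pB. norm (\<phi> (chan L x)) \<le> B"
      using B chan_bound by auto
    show "(\<lambda>om. \<phi> (chan L om)) \<in> borel_measurable (\<Pi>\<^sub>M l\<in>{..<L}. tx_measure pB)"
      by (rule borel_measurable_continuous_on[OF assms(1) chan_meas])
  qed
qed

lemma chan0: "chan 0 om = 0" by (simp add: chan_def)

lemma base:
  fixes \<phi> :: "complex \<Rightarrow> real"
  assumes "0 \<le> pB" "pB \<le> 1"
  shows "(\<integral>om. \<phi> (chan 0 om) \<partial>(\<Pi>\<^sub>M l\<in>{..<0}. tx_measure pB)) = \<phi> 0"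
proof -
  show ?thesis using prob_M[OF assms, THEN prob_space.prob_space, of "0::nat"] by (simp add: chan0 lessThan_0)
qed

lemma chan_upd: "chan (Suc L) (om(L := x)) = chan L om + of_bool (fst x) * cis (snd x)"
proof -
  have "(\<Sum>l<L. of_bool (fst ((om(L := x)) l)) * cis (snd ((om(L := x)) l))) = chan L om"
    unfolding chan_def by (intro sum.cong) auto
  then show ?thesis by (simp add: chan_def)
qed

lemma inner:
  fixes \<phi> \<Phi> :: "complex \<Rightarrow> real"
  assumes cont: "continuous_on UNIV \<phi>" and avg: "\<And>c. (\<integral>\<theta>. \<phi> (c + cis \<theta>) \<partial>U) = \<Phi> c"
    and p: "0 \<le> pB" "pB \<le> 1"
  shows "(\<integral>x. \<phi> (c + of_bool (fst x) * cis (snd x)) \<partial>tx_measure pB) = pB * \<phi> c + (1 - pB) * \<Phi> c"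
proof -
  interpret U: prob_space U by (rule prob_U)
  interpret pair_sigma_finite "measure_pmf (bernoulli_pmf (1 - pB))" U
    by (intro pair_sigma_finite.intro prob_space_imp_sigma_finite prob_space_measure_pmf prob_U)
  interpret T: prob_space "tx_measure pB" by (rule prob_T[OF p])
  obtain B where B: "\<forall>z. cmod z \<le> cmod c + 1 \<longrightarrow> \<bar>\<phi> z\<bar> \<le> B" using cont_bound[OF cont] by blast
  have int: "integrable (tx_measure pB) (\<lambda>x. \<phi> (c + of_bool (fst x) * cis (snd x)))"
  proof (rule T.integrable_const_bound[where B=B])
    have "cmod (c + of_bool (fst x) * cis (snd x)) \<le> cmod c + 1" for x
      using norm_triangle_ineq[of c "of_bool (fst x) * cis (snd x)"] by (auto simp: norm_mult)
    then show "AE x in tx_measure pB. norm (\<phi> (c + of_bool (fst x) * cis (snd x))) \<le> B"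
      using B by auto
    show "(\<lambda>x. \<phi> (c + of_bool (fst x) * cis (snd x))) \<in> borel_measurable (tx_measure pB)"
      by (intro borel_measurable_continuous_on[OF cont] borel_measurable_add T_meas) simp
  qed
  have "(\<integral>x. \<phi> (c + of_bool (fst x) * cis (snd x)) \<partial>tx_measure pB)
     = (\<integral>\<beta>. (\<integral>\<theta>. \<phi> (c + of_bool \<beta> * cis \<theta>) \<partial>U) \<partial>measure_pmf (bernoulli_pmf (1 - pB)))"
    using integral_fst'[OF int[unfolded tx_measure_def]] by (simp add: tx_measure_def)
  also have "\<dots> = (\<integral>\<theta>. \<phi> (c + of_bool True * cis \<theta>) \<partial>U) * (1 - pB) + (\<integral>\<theta>. \<phi> (c + of_bool False * cis \<theta>) \<partial>U) * (1 - (1 - pB))"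
    by (rule integral_bernoulli_pmf) (use p in auto)
  also have "(\<lambda>\<theta>. \<phi> (c + of_bool True * cis \<theta>)) = (\<lambda>\<theta>. \<phi> (c + cis \<theta>))" by simp
  also have "(\<lambda>\<theta>. \<phi> (c + of_bool False * cis \<theta>)) = (\<lambda>\<theta>. \<phi> c)" by simp
  also have "(\<integral>\<theta>. \<phi> c \<partial>U) = \<phi> c" using U.prob_space by simp
  finally show ?thesis by (simp only: avg) (simp add: algebra_simps)
qed



lemma rec:
  fixes \<phi> \<Phi> :: "complex \<Rightarrow> real"
  assumes cont: "continuous_on UNIV \<phi>" and contP: "continuous_on UNIV \<Phi>"
    and avg: "\<And>c. (\<integral>\<theta>. \<phi> (c + cis \<theta>) \<partial>U) = \<Phi> c"
    and p: "0 \<le> pB" "pB \<le> 1"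
  shows "(\<integral>om. \<phi> (chan (Suc L) om) \<partial>(\<Pi>\<^sub>M l\<in>{..<Suc L}. tx_measure pB))
    = pB * (\<integral>om. \<phi> (chan L om) \<partial>(\<Pi>\<^sub>M l\<in>{..<L}. tx_measure pB))
      + (1 - pB) * (\<integral>om. \<Phi> (chan L om) \<partial>(\<Pi>\<^sub>M l\<in>{..<L}. tx_measure pB))"
proof -
  interpret product_sigma_finite "\<lambda>l::nat. tx_measure pB"
    by (intro product_sigma_finite.intro prob_space_imp_sigma_finite prob_T p)
  have e: "{..<Suc L} = insert L {..<L}" by auto
  have int: "integrable (\<Pi>\<^sub>M l\<in>insert L {..<L}. tx_measure pB) (\<lambda>om. \<phi> (chan (Suc L) om))"
    using integrable_phi_chan[OF cont p, of "Suc L"] unfolding e .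
  have "(\<integral>om. \<phi> (chan (Suc L) om) \<partial>(\<Pi>\<^sub>M l\<in>{..<Suc L}. tx_measure pB))
     = (\<integral>om. (\<integral>x. \<phi> (chan (Suc L) (om(L := x))) \<partial>tx_measure pB) \<partial>(\<Pi>\<^sub>M l\<in>{..<L}. tx_measure pB))"
    unfolding e by (rule product_integral_insert[OF _ _ int]) auto
  also have "\<dots> = (\<integral>om. pB * \<phi> (chan L om) + (1 - pB) * \<Phi> (chan L om) \<partial>(\<Pi>\<^sub>M l\<in>{..<L}. tx_measure pB))"
    by (rule Bochner_Integration.integral_cong[OF refl]) (simp only: chan_upd inner[OF cont avg p])
  also have "\<dots> = pB * (\<integral>om. \<phi> (chan L om) \<partial>(\<Pi>\<^sub>M l\<in>{..<L}. tx_measure pB))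
      + (1 - pB) * (\<integral>om. \<Phi> (chan L om) \<partial>(\<Pi>\<^sub>M l\<in>{..<L}. tx_measure pB))"
    using integrable_phi_chan[OF cont p, of L] integrable_phi_chan[OF contP p, of L] by simp
  finally show ?thesis .
qed



lemma ftc2pi:
  fixes F f :: "real \<Rightarrow> real"
  assumes "\<And>\<theta>. (F has_real_derivative f \<theta>) (at \<theta>)"
  shows "(f has_integral (F (2*pi) - F 0)) {0..2*pi}"
proof (rule fundamental_theorem_of_calculus)
  fix x assume "x \<in> {0..2*pi}"
  show "(F has_vector_derivative f x) (at x within {0..2 * pi})"
    using assms[of x] by (simp add: has_real_derivative_iff_has_vector_derivative has_vector_derivative_at_within)
qed simp

lemma cmod_sq: "(cmod (c + cis t))\<^sup>2 = (cmod c)\<^sup>2 + 1 + 2 * (Re c * cos t + Im c * sin t)"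
proof -
  have "(cmod (c + cis t))\<^sup>2 = (Re c + cos t)\<^sup>2 + (Im c + sin t)\<^sup>2" by (simp add: cmod_power2)
  also have "\<dots> = (Re c)\<^sup>2 + (Im c)\<^sup>2 + (cos t * cos t + sin t * sin t) + 2 * (Re c * cos t + Im c * sin t)"
    by (simp add: power2_eq_square algebra_simps)
  also have "\<dots> = (cmod c)\<^sup>2 + 1 + 2 * (Re c * cos t + Im c * sin t)"
    by (simp add: cmod_power2)
  finally show ?thesis .
qed

lemma avg1: "(\<integral>\<theta>. (cmod (c + cis \<theta>))\<^sup>2 \<partial>U) = (cmod c)\<^sup>2 + 1"
proof -
  let ?K = "(cmod c)\<^sup>2 + 1"
  have cont: "continuous_on UNIV (\<lambda>\<theta>. (cmod (c + cis \<theta>))\<^sup>2)"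
    by (intro continuous_intros)
  have "((\<lambda>\<theta>. (cmod (c + cis \<theta>))\<^sup>2) has_integral
      ((\<lambda>\<theta>. ?K * \<theta> + 2 * (Re c * sin \<theta> - Im c * cos \<theta>)) (2*pi) - (\<lambda>\<theta>. ?K * \<theta> + 2 * (Re c * sin \<theta> - Im c * cos \<theta>)) 0)) {0..2*pi}"
    by (rule ftc2pi) (auto intro!: derivative_eq_intros simp: cmod_sq algebra_simps)
  then have "integral {0..2*pi} (\<lambda>\<theta>. (cmod (c + cis \<theta>))\<^sup>2) = 2 * pi * ?K"
    by (simp add: integral_unique)
  then show ?thesis by (simp add: U_integral[OF cont])
qed

lemma avg2: "(\<integral>\<theta>. (cmod (c + cis \<theta>))^4 \<partial>U) = ((cmod c)\<^sup>2 + 1)\<^sup>2 + 2 * (cmod c)\<^sup>2"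
proof -
  let ?K = "(cmod c)\<^sup>2 + 1"
  let ?a = "Re c" and ?b = "Im c"
  define F where "F = (\<lambda>\<theta>. ?K\<^sup>2 * \<theta> + 4 * ?K * (?a * sin \<theta> - ?b * cos \<theta>)
     + 4 * (?a\<^sup>2 * (\<theta>/2 + sin \<theta> * cos \<theta> / 2) + ?a * ?b * (sin \<theta>)\<^sup>2 + ?b\<^sup>2 * (\<theta>/2 - sin \<theta> * cos \<theta> / 2)))"
  have cont: "continuous_on UNIV (\<lambda>\<theta>. (cmod (c + cis \<theta>))^4)"
    by (intro continuous_intros)
  have e4: "(cmod (c + cis \<theta>))^4 = ((cmod (c + cis \<theta>))\<^sup>2)\<^sup>2" for \<theta> by simp
  have "((\<lambda>\<theta>. (cmod (c + cis \<theta>))^4) has_integral (F (2*pi) - F 0)) {0..2*pi}"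
  proof (rule ftc2pi)
    fix \<theta> :: real
    have s: "sin \<theta> * sin \<theta> = 1 - cos \<theta> * cos \<theta>" using sin_cos_squared_add3[of \<theta>] by linarith
    show "(F has_real_derivative (cmod (c + cis \<theta>))^4) (at \<theta>)"
      unfolding F_def e4 cmod_sq
      by (auto intro!: derivative_eq_intros simp: power2_eq_square algebra_simps)
        (insert sin_cos_squared_add3[of \<theta>], algebra)
  qed
  moreover have "F (2*pi) - F 0 = 2 * pi * (?K\<^sup>2 + 2 * (cmod c)\<^sup>2)"
    by (simp add: F_def cmod_power2 algebra_simps)
  ultimately have "integral {0..2*pi} (\<lambda>\<theta>. (cmod (c + cis \<theta>))^4) = 2 * pi * (?K\<^sup>2 + 2 * (cmod c)\<^sup>2)"
    by (simp add: integral_unique)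
  then show ?thesis by (simp add: U_integral[OF cont])
qed



definition lam :: "real \<Rightarrow> real \<Rightarrow> real" where
  "lam P r = (1 + P * (r\<^sup>2 + 1) + sqrt ((1 + P * (r\<^sup>2 + 1))\<^sup>2 - 4 * P\<^sup>2 * r\<^sup>2)) / 2"

lemma lam_props:
  assumes P: "P > 0" and r: "r \<ge> 0"
  shows "lam P r * lam P r - (1 + P * (r\<^sup>2 + 1)) * lam P r + P\<^sup>2 * r\<^sup>2 = 0"
    and "lam P r > P * r" and "lam P r \<ge> 1 + P" and "lam P r > 1 + r\<^sup>2 * P"
proof -
  define A where "A = 1 + P * (r\<^sup>2 + 1)"
  define D where "D = A\<^sup>2 - 4 * P\<^sup>2 * r\<^sup>2"
  define s where "s = sqrt D"
  have l: "lam P r = (A + s) / 2" by (simp add: lam_def A_def D_def s_def)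
  have A2: "A - 2 * P * r = 1 + P * (r - 1)\<^sup>2" by (simp add: A_def power2_eq_square algebra_simps)
  have "P * (r - 1)\<^sup>2 \<ge> 0" using P by simp
  then have Agt: "A > 2 * P * r" using A2 by linarith
  have "(2 * P * r)\<^sup>2 \<le> A\<^sup>2" using Agt P r by (intro power_mono) auto
  moreover have "(2 * P * r)\<^sup>2 = 4 * P\<^sup>2 * r\<^sup>2" by (simp add: power2_eq_square)
  ultimately have D0: "D \<ge> 0" unfolding D_def by linarith
  have ss: "s * s = D" unfolding s_def using real_sqrt_mult_self[of D] D0 by linarith
  have s0: "s \<ge> 0" using D0 by (simp add: s_def)
  show "lam P r * lam P r - (1 + P * (r\<^sup>2 + 1)) * lam P r + P\<^sup>2 * r\<^sup>2 = 0"
    unfolding l A_def[symmetric] using ss unfolding D_def by (simp add: field_simps power2_eq_square)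
  have "2 * (P * r) < A" using Agt by (simp add: mult.assoc)
  then show "lam P r > P * r" using s0 l by (simp add: field_simps)
  have "D - (1 + P - P * r\<^sup>2)\<^sup>2 = 4 * P * r\<^sup>2" by (simp add: D_def A_def power2_eq_square algebra_simps)
  moreover have "4 * P * r\<^sup>2 \<ge> 0" using P by simp
  ultimately have "(1 + P - P * r\<^sup>2)\<^sup>2 \<le> D" by linarith
  then have "1 + P - P * r\<^sup>2 \<le> s" unfolding s_def by (rule real_le_rsqrt)
  then show "lam P r \<ge> 1 + P" using l by (simp add: A_def algebra_simps)
  have "D - (1 + P * r\<^sup>2 - P)\<^sup>2 = 4 * P" by (simp add: D_def A_def power2_eq_square algebra_simps)
  then have "(1 + P * r\<^sup>2 - P)\<^sup>2 < D" using P by linarith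
  then have "1 + P * r\<^sup>2 - P < s" unfolding s_def by (rule real_less_rsqrt)
  then show "lam P r > 1 + r\<^sup>2 * P" using l by (simp add: A_def algebra_simps)
qed

lemma factor_id:
  fixes c :: complex and t P :: real
  assumes P: "P > 0"
  defines "r \<equiv> cmod c"
  defines "w \<equiv> complex_of_real (P / lam P r) * cnj c"
  shows "1 + (cmod (c + cis t))\<^sup>2 * P = lam P r * (cmod (1 + w * cis t))\<^sup>2"
    and "cmod w < 1"
proof -
  have r0: "r \<ge> 0" by (simp add: r_def)
  note L = lam_props[OF P r0]
  define l where "l = lam P r"
  have lpos: "l > 0" using L(2) P r0 l_def by (smt (verit) mult_nonneg_nonneg)
  have eq: "l * l - (1 + P * (r\<^sup>2 + 1)) * l + P\<^sup>2 * r\<^sup>2 = 0" using L(1) l_def by simp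
  let ?a = "Re c" and ?b = "Im c"
  have rr: "r\<^sup>2 = ?a\<^sup>2 + ?b\<^sup>2" by (simp add: r_def cmod_power2)
  define k where "k = P / l"
  have "(cmod (1 + w * cis t))\<^sup>2 = (1 + k * (?a * cos t + ?b * sin t))\<^sup>2 + (k * (?a * sin t - ?b * cos t))\<^sup>2"
    by (simp add: cmod_power2 w_def l_def[symmetric] k_def algebra_simps add_divide_distrib diff_divide_distrib)
  also have "\<dots> = 1 + 2 * k * (?a * cos t + ?b * sin t) + k\<^sup>2 * r\<^sup>2"
    using sin_cos_squared_add3[of t] rr by algebra
  finally have X: "(cmod (1 + w * cis t))\<^sup>2 = 1 + 2 * (P/l) * (?a * cos t + ?b * sin t) + (P/l)\<^sup>2 * r\<^sup>2"
    by (simp add: k_def)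
  have "l * (cmod (1 + w * cis t))\<^sup>2 = l + 2 * P * (?a * cos t + ?b * sin t) + P\<^sup>2 * r\<^sup>2 / l"
    unfolding X using lpos by (simp add: field_simps power2_eq_square)
  also have "P\<^sup>2 * r\<^sup>2 / l = (1 + P * (r\<^sup>2 + 1)) - l"
    using eq lpos by (simp add: field_simps)
  finally show "1 + (cmod (c + cis t))\<^sup>2 * P = lam P r * (cmod (1 + w * cis t))\<^sup>2"
    by (simp add: cmod_sq l_def[symmetric] r_def[symmetric] algebra_simps)
  have "cmod w = P / l * r" using P lpos by (simp add: w_def norm_mult norm_divide r_def l_def)
  also have "\<dots> < 1" using L(2) lpos l_def by (simp add: field_simps)
  finally show "cmod w < 1" .
qed

lemma avg3:
  assumes b: "b > 1" and P: "P > 0"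
  shows "(\<integral>\<theta>. log b (1 + (cmod (c + cis \<theta>))\<^sup>2 * P) \<partial>U) = log b (lam P (cmod c))"
proof -
  define r where "r = cmod c"
  define w where "w = complex_of_real (P / lam P r) * cnj c"
  note F = factor_id[OF P, of c, folded r_def, folded w_def]
  have r0: "r \<ge> 0" by (simp add: r_def)
  note L = lam_props[OF P r0]
  have lpos: "lam P r > 0" using L(3) P by linarith
  have nz: "cmod (1 + w * cis t) > 0" for t
  proof -
    have "cmod (w * cis t) < 1" using F(2) by (simp add: norm_mult)
    have "1 + w * cis t \<noteq> 0"
    proof
      assume "1 + w * cis t = 0"
      then have "w * cis t = -1" by (simp add: eq_neg_iff_add_eq_0 add.commute)
      then show False using \<open>cmod (w * cis t) < 1\<close> by simp
    qed
    then show ?thesis by simp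
  qed
  have fe: "log b (1 + (cmod (c + cis t))\<^sup>2 * P) = (ln (lam P r) + 2 * ln (cmod (1 + w * cis t))) / ln b" for t
    unfolding F(1) using lpos nz[of t] by (simp add: log_def ln_mult ln_realpow)
  have cont: "continuous_on UNIV (\<lambda>\<theta>. log b (1 + (cmod (c + cis \<theta>))\<^sup>2 * P))"
  proof -
    have "1 + (cmod z)\<^sup>2 * P > 0" for z using P by (smt (verit) mult_nonneg_nonneg zero_le_power2)
    then show ?thesis using b by (intro continuous_intros) (auto simp: less_imp_neq[symmetric])
  qed
  have c1: "((\<lambda>t. ln (lam P r)) has_integral (2*pi) * ln (lam P r)) {0..2*pi}"
    using has_integral_const_real[of "ln (lam P r)" 0 "2*pi"] by simp
  have "((\<lambda>t. ln (lam P r) + 2 * ln (cmod (1 + w * cis t))) has_integral ((2*pi) * ln (lam P r) + 2 * 0)) {0..2*pi}"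
    by (intro has_integral_add c1 has_integral_mult_right mv F(2))
  note hh = this
  have "((\<lambda>t. (ln (lam P r) + 2 * ln (cmod (1 + w * cis t))) / ln b) has_integral (2 * pi * ln (lam P r) / ln b)) {0..2*pi}"
    using has_integral_divide[OF hh, of "ln b"] by simp
  then have I: "integral {0..2*pi} (\<lambda>\<theta>. log b (1 + (cmod (c + cis \<theta>))\<^sup>2 * P)) = 2 * pi * ln (lam P r) / ln b"
    unfolding fe by (rule integral_unique)
  have "(\<integral>\<theta>. log b (1 + (cmod (c + cis \<theta>))\<^sup>2 * P) \<partial>U) = integral {0..2*pi} (\<lambda>\<theta>. log b (1 + (cmod (c + cis \<theta>))\<^sup>2 * P)) / (2*pi)"
    by (rule U_integral[OF cont])
  also have "\<dots> = ln (lam P r) / ln b" unfolding I by simp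
  finally show ?thesis by (simp add: log_def r_def)
qed



lemma lin2:
  assumes "prob_space M" "integrable M f" "integrable M g"
  shows "(\<integral>x. \<alpha> * f x + \<beta> * g x + \<gamma> \<partial>M) = \<alpha> * integral\<^sup>L M f + \<beta> * integral\<^sup>L M g + (\<gamma>::real)"
proof -
  have i1: "integrable M (\<lambda>x. \<alpha> * f x)" by (rule Bochner_Integration.integrable_mult_right[OF assms(2)])
  have i2: "integrable M (\<lambda>x. \<beta> * g x)" by (rule Bochner_Integration.integrable_mult_right[OF assms(3)])
  interpret prob_space M by (rule assms(1))
  have i3: "integrable M (\<lambda>x. \<gamma>)" by simp
  have "(\<integral>x. \<alpha> * f x + \<beta> * g x + \<gamma> \<partial>M) = (\<integral>x. \<alpha> * f x + \<beta> * g x \<partial>M) + (\<integral>x. \<gamma> \<partial>M)"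
    by (rule Bochner_Integration.integral_add[OF Bochner_Integration.integrable_add[OF i1 i2] i3])
  also have "(\<integral>x. \<alpha> * f x + \<beta> * g x \<partial>M) = (\<integral>x. \<alpha> * f x \<partial>M) + (\<integral>x. \<beta> * g x \<partial>M)"
    by (rule Bochner_Integration.integral_add[OF i1 i2])
  finally show ?thesis by (simp add: prob_space.prob_space[OF assms(1)])
qed

lemma psi_le:
  fixes a c x b P :: real
  assumes b: "b > 1" and P: "P > 0" and a: "0 < a" "a < c" and x: "x \<ge> 0"
  shows "log b (1 + a * P) * ((x - a) * (c - x) / ((c - a)\<^sup>2 / 4)) \<le> log b (1 + x * P)"
proof -
  have ap: "a * P > 0" using a P by simp
  have xp: "x * P \<ge> 0" using x P by simp
  have la: "log b (1 + a * P) > 0" using b ap by simp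
  have K: "(c - a)\<^sup>2 / 4 > 0" using a by simp
  have lx: "log b (1 + x * P) \<ge> 0" using b xp by simp
  show ?thesis
  proof (cases "x < a")
    case True
    then have "(x - a) * (c - x) \<le> 0" using a by (intro mult_nonpos_nonneg) auto
    then have "(x - a) * (c - x) / ((c - a)\<^sup>2 / 4) \<le> 0" using K by (rule divide_nonpos_pos)
    then have "log b (1 + a * P) * ((x - a) * (c - x) / ((c - a)\<^sup>2 / 4)) \<le> 0"
      using la by (intro mult_nonneg_nonpos) auto
    then show ?thesis using lx by linarith
  next
    case False
    have "(c - a)\<^sup>2 - 4 * ((x - a) * (c - x)) = (2 * x - a - c)\<^sup>2"
      by (simp add: power2_eq_square algebra_simps)
    moreover have "(2 * x - a - c)\<^sup>2 \<ge> 0" by simp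
    ultimately have "(x - a) * (c - x) \<le> (c - a)\<^sup>2 / 4" by linarith
    then have t1: "(x - a) * (c - x) / ((c - a)\<^sup>2 / 4) \<le> 1" using K by simp
    have "log b (1 + a * P) * ((x - a) * (c - x) / ((c - a)\<^sup>2 / 4)) \<le> log b (1 + a * P)"
      using mult_left_le[OF t1, of "log b (1 + a * P)"] la by simp
    also have "\<dots> \<le> log b (1 + x * P)" using False b P ap xp by (simp add: mult_right_mono)
    finally show ?thesis .
  qed
qed

theorem proposition4:
  fixes b P pB :: real
  assumes "b > 1" and "P > 0" and "0 \<le> pB" and "pB < 1"
  shows "(\<forall>L\<ge>1. rate b P pB L \<ge> (1 - pB ^ L) * log b (1 + P))
       \<and> (\<forall>L\<ge>1. rate b P pB L < rate b P pB (Suc L))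
       \<and> filterlim (rate b P pB) at_top sequentially"
proof -
  note b = assms(1) and P = assms(2)
  have p: "0 \<le> pB" "pB \<le> 1" using assms by auto
  define s where "s = 1 - pB"
  have s0: "s > 0" using assms by (simp add: s_def)
  define M where "M = (\<lambda>L::nat. \<Pi>\<^sub>M l\<in>{..<L}. tx_measure pB)"
  have probM: "prob_space (M L)" for L unfolding M_def by (rule prob_M[OF p])
  have intg: "integrable (M L) (\<lambda>om. \<phi> (chan L om))" if "continuous_on UNIV \<phi>" for \<phi> :: "complex \<Rightarrow> real" and L
    unfolding M_def by (rule integrable_phi_chan[OF that p])
  have pos1: "1 + (cmod z)\<^sup>2 * P > 0" for z using P by (smt (verit) mult_nonneg_nonneg zero_le_power2)
  have lampos: "lam P (cmod z) > 0" for z using lam_props(3)[OF P, of "cmod z"] P by simp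
  have c1: "continuous_on UNIV (\<lambda>z::complex. (cmod z)\<^sup>2)" by (intro continuous_intros)
  have c1': "continuous_on UNIV (\<lambda>z::complex. (cmod z)\<^sup>2 + 1)" by (intro continuous_intros)
  have c2: "continuous_on UNIV (\<lambda>z::complex. (cmod z)^4)" by (intro continuous_intros)
  have c2': "continuous_on UNIV (\<lambda>z::complex. ((cmod z)\<^sup>2 + 1)\<^sup>2 + 2 * (cmod z)\<^sup>2)" by (intro continuous_intros)
  have c3: "continuous_on UNIV (\<lambda>z::complex. log b (1 + (cmod z)\<^sup>2 * P))"
    using b pos1 by (intro continuous_intros) (auto simp: less_imp_neq[symmetric])
  have c3': "continuous_on UNIV (\<lambda>z::complex. log b (lam P (cmod z)))"
    unfolding lam_def using b lampos[unfolded lam_def]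
    by (intro continuous_intros) (auto simp: less_imp_neq[symmetric])
  define m where "m L = (\<integral>om. (cmod (chan L om))\<^sup>2 \<partial>M L)" for L
  define q where "q L = (\<integral>om. (cmod (chan L om))^4 \<partial>M L)" for L
  define J where "J L = (\<integral>om. log b (lam P (cmod (chan L om))) \<partial>M L)" for L
  have R_def: "rate b P pB L = (\<integral>om. log b (1 + (cmod (chan L om))\<^sup>2 * P) \<partial>M L)" for L
    by (simp add: rate_def M_def)
  have m0: "m 0 = 0" unfolding m_def M_def using base[OF p, of "\<lambda>z. (cmod z)\<^sup>2"] by simp
  have q0: "q 0 = 0" unfolding q_def M_def using base[OF p, of "\<lambda>z. (cmod z)^4"] by simp
  have R0: "rate b P pB 0 = 0" unfolding R_def M_def using base[OF p, of "\<lambda>z. log b (1 + (cmod z)\<^sup>2 * P)"] by simp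
  have mS: "m (Suc L) = m L + s" for L
  proof -
    have "m (Suc L) = pB * m L + (1 - pB) * (\<integral>om. (cmod (chan L om))\<^sup>2 + 1 \<partial>M L)"
      unfolding m_def M_def by (rule rec[where \<phi> = "\<lambda>z. (cmod z)\<^sup>2" and \<Phi> = "\<lambda>z. (cmod z)\<^sup>2 + 1", OF c1 c1' avg1 p])
    also have "(\<integral>om. (cmod (chan L om))\<^sup>2 + 1 \<partial>M L) = (\<integral>om. 1 * (cmod (chan L om))\<^sup>2 + 0 * (cmod (chan L om))\<^sup>2 + 1 \<partial>M L)"
      by simp
    also have "\<dots> = 1 * m L + 0 * m L + 1"
      unfolding m_def by (rule lin2[OF probM intg[OF c1] intg[OF c1]])
    finally show ?thesis by (simp add: s_def algebra_simps)
  qed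
  have mL: "m L = s * L" for L by (induction L) (simp_all add: m0 mS algebra_simps)
  have qS: "q (Suc L) = q L + s * (4 * m L + 1)" for L
  proof -
    have "q (Suc L) = pB * q L + (1 - pB) * (\<integral>om. ((cmod (chan L om))\<^sup>2 + 1)\<^sup>2 + 2 * (cmod (chan L om))\<^sup>2 \<partial>M L)"
      unfolding q_def M_def by (rule rec[where \<phi> = "\<lambda>z. (cmod z)^4" and \<Phi> = "\<lambda>z. ((cmod z)\<^sup>2 + 1)\<^sup>2 + 2 * (cmod z)\<^sup>2", OF c2 c2' avg2 p])
    also have "(\<integral>om. ((cmod (chan L om))\<^sup>2 + 1)\<^sup>2 + 2 * (cmod (chan L om))\<^sup>2 \<partial>M L)
        = (\<integral>om. 1 * (cmod (chan L om))^4 + 4 * (cmod (chan L om))\<^sup>2 + 1 \<partial>M L)"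
      by (rule Bochner_Integration.integral_cong[OF refl]) (simp add: power2_eq_square power4_eq_xxxx algebra_simps)
    also have "\<dots> = 1 * q L + 4 * m L + 1"
      unfolding q_def m_def by (rule lin2[OF probM intg[OF c2] intg[OF c1]])
    finally show ?thesis by (simp add: s_def algebra_simps)
  qed
  have qL: "q L \<le> 2 * (s * L)\<^sup>2 + s * L" for L
  proof (induction L)
    case 0 then show ?case by (simp add: q0)
  next
    case (Suc L)
    have "q (Suc L) = q L + 4 * s\<^sup>2 * L + s" by (simp add: qS mL power2_eq_square algebra_simps)
    also have "\<dots> \<le> 2 * (s * L)\<^sup>2 + s * L + 4 * s\<^sup>2 * L + s" using Suc by simp
    also have "\<dots> \<le> 2 * (s * Suc L)\<^sup>2 + s * Suc L"
      using s0 by (simp add: power2_eq_square algebra_simps)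
    finally show ?case .
  qed
  have RS: "rate b P pB (Suc L) = pB * rate b P pB L + s * J L" for L
    unfolding R_def J_def M_def s_def
    by (rule rec[where \<phi> = "\<lambda>z. log b (1 + (cmod z)\<^sup>2 * P)" and \<Phi> = "\<lambda>z. log b (lam P (cmod z))", OF c3 c3' avg3[OF b P] p])
  have JL1: "J L \<ge> log b (1 + P)" for L
  proof -
    have "(\<integral>om. log b (1 + P) \<partial>M L) \<le> J L"
      unfolding J_def
    proof (rule integral_mono)
      interpret PM: prob_space "M L" by (rule probM)
      show "integrable (M L) (\<lambda>om. log b (1 + P))" by simp
      show "integrable (M L) (\<lambda>om. log b (lam P (cmod (chan L om))))" by (rule intg[OF c3'])
      fix om
      show "log b (1 + P) \<le> log b (lam P (cmod (chan L om)))"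
        using lam_props(3)[OF P, of "cmod (chan L om)"] b P lampos[of "chan L om"] by simp
    qed
    then show ?thesis using probM[of L] by (simp add: prob_space.prob_space)
  qed
  have part1: "rate b P pB L \<ge> (1 - pB ^ L) * log b (1 + P)" for L
  proof (induction L)
    case 0 then show ?case by (simp add: R0)
  next
    case (Suc L)
    have "(1 - pB ^ Suc L) * log b (1 + P) = pB * ((1 - pB ^ L) * log b (1 + P)) + s * log b (1 + P)"
      by (simp add: s_def algebra_simps)
    also have "\<dots> \<le> pB * rate b P pB L + s * J L"
      using Suc p s0 JL1[of L] by (intro add_mono mult_left_mono) auto
    finally show ?case by (simp add: RS)
  qed
  have part2: "rate b P pB L < rate b P pB (Suc L)" for L
  proof -
    interpret PM: prob_space "M L" by (rule probM)
    have "rate b P pB L < J L"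
      unfolding R_def J_def
    proof (rule PM.integral_less_AE_space)
      show "integrable (M L) (\<lambda>om. log b (1 + (cmod (chan L om))\<^sup>2 * P))" by (rule intg[OF c3])
      show "integrable (M L) (\<lambda>om. log b (lam P (cmod (chan L om))))" by (rule intg[OF c3'])
      show "emeasure (M L) (space (M L)) \<noteq> 0" by (simp add: PM.emeasure_space_1)
      show "AE om in M L. log b (1 + (cmod (chan L om))\<^sup>2 * P) < log b (lam P (cmod (chan L om)))"
        using lam_props(4)[OF P] b pos1 lampos by (auto simp: mult.commute)
    qed
    then have "0 < s * (J L - rate b P pB L)" using s0 by simp
    moreover have "rate b P pB (Suc L) - rate b P pB L = s * (J L - rate b P pB L)"
      by (simp add: RS s_def algebra_simps)
    ultimately show ?thesis by linarith
  qed
  have low: "rate b P pB L \<ge> 4 / 49 * log b (1 + (s * L / 2) * P)" if L4: "s * L \<ge> 4" for L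
  proof -
    define mm where "mm = s * L"
    have mm4: "mm \<ge> 4" using L4 by (simp add: mm_def)
    define a where "a = mm / 2"
    define c where "c = 4 * mm"
    define la where "la = log b (1 + a * P)"
    define K where "K = (c - a)\<^sup>2 / 4"
    have apos: "0 < a" "a < c" using mm4 by (auto simp: a_def c_def)
    have K: "K = 49 * mm\<^sup>2 / 16" by (simp add: K_def a_def c_def power2_eq_square field_simps)
    have "mm\<^sup>2 > 0" using mm4 by simp
    then have Kpos: "K > 0" unfolding K by simp
    have "a * P > 0" using apos P by simp
    then have lapos: "la > 0" using b by (simp add: la_def)
    have "(\<integral>om. (- la / K) * (cmod (chan L om))^4 + (la / K * (a + c)) * (cmod (chan L om))\<^sup>2 + (- la / K * a * c) \<partial>M L)
        \<le> rate b P pB L"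
      unfolding R_def
    proof (rule integral_mono)
      interpret PM: prob_space "M L" by (rule probM)
      show "integrable (M L) (\<lambda>om. (- la / K) * (cmod (chan L om))^4 + (la / K * (a + c)) * (cmod (chan L om))\<^sup>2 + (- la / K * a * c))"
        using intg[OF c2, of L] intg[OF c1, of L]
        by (intro Bochner_Integration.integrable_add Bochner_Integration.integrable_mult_right) auto
      show "integrable (M L) (\<lambda>om. log b (1 + (cmod (chan L om))\<^sup>2 * P))" by (rule intg[OF c3])
      fix om
      define x where "x = (cmod (chan L om))\<^sup>2"
      have "(- la / K) * (cmod (chan L om))^4 + (la / K * (a + c)) * (cmod (chan L om))\<^sup>2 + (- la / K * a * c)
          = la * ((x - a) * (c - x) / K)"
      proof -
        have e4: "(cmod (chan L om))^4 = x * x" by (simp add: x_def power2_eq_square power4_eq_xxxx)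
        have e2: "(cmod (chan L om))\<^sup>2 = x" by (simp add: x_def)
        show ?thesis unfolding e4 e2 using Kpos by (simp add: field_simps)
      qed
      also have "\<dots> \<le> log b (1 + x * P)"
        unfolding la_def K_def by (rule psi_le[OF b P apos]) (simp add: x_def)
      finally show "(- la / K) * (cmod (chan L om))^4 + (la / K * (a + c)) * (cmod (chan L om))\<^sup>2 + (- la / K * a * c)
          \<le> log b (1 + (cmod (chan L om))\<^sup>2 * P)" by (simp add: x_def)
    qed
    moreover have "(\<integral>om. (- la / K) * (cmod (chan L om))^4 + (la / K * (a + c)) * (cmod (chan L om))\<^sup>2 + (- la / K * a * c) \<partial>M L)
        = (- la / K) * q L + (la / K * (a + c)) * m L + (- la / K * a * c)"
      unfolding q_def m_def by (rule lin2[OF probM intg[OF c2] intg[OF c1]])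
    moreover have "(- la / K) * q L + (la / K * (a + c)) * m L + (- la / K * a * c) = la / K * (- q L + (a + c) * mm - a * c)"
      using Kpos by (simp add: mL mm_def field_simps)
    moreover have "- q L + (a + c) * mm - a * c \<ge> mm\<^sup>2 / 4"
    proof -
      have "q L \<le> 2 * mm\<^sup>2 + mm" using qL[of L] by (simp add: mm_def)
      moreover have "mm \<le> mm\<^sup>2 / 4" using mm4 by (simp add: power2_eq_square)
      ultimately show ?thesis by (simp add: a_def c_def power2_eq_square field_simps)
    qed
    moreover have "la / K * (mm\<^sup>2 / 4) = 4 / 49 * la" using mm4 by (simp add: K power2_eq_square field_simps)
    ultimately have "4 / 49 * la \<le> rate b P pB L"
      using mult_left_mono[of "mm\<^sup>2 / 4" "- q L + (a + c) * mm - a * c" "la / K"] lapos Kpos by simp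
    then show ?thesis by (simp add: la_def a_def mm_def)
  qed
  have part3: "filterlim (rate b P pB) at_top sequentially"
    unfolding filterlim_at_top eventually_sequentially
  proof
    fix Z :: real
    obtain N :: nat where N: "4 / s + 2 * b powr (49 / 4 * Z) / (s * P) < real N"
      using reals_Archimedean2 by blast
    show "\<exists>N. \<forall>L\<ge>N. Z \<le> rate b P pB L"
    proof (intro exI allI impI)
      fix L assume "N \<le> L"
      then have NL: "real N \<le> real L" by simp
      have bp: "b powr (49 / 4 * Z) > 0" using b by simp
      have "4 / s < real L" using N NL bp s0 P by (smt (verit) divide_pos_pos mult_pos_pos)
      then have L4: "s * L \<ge> 4" using s0 by (simp add: field_simps)
      have "2 * b powr (49 / 4 * Z) / (s * P) < real L" using N NL s0 by (smt (verit) divide_pos_pos)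
      then have "b powr (49 / 4 * Z) \<le> (s * L / 2) * P" using s0 P by (simp add: field_simps)
      then have "b powr (49 / 4 * Z) \<le> 1 + (s * L / 2) * P" by linarith
      moreover have "0 < 1 + (s * L / 2) * P" using calculation bp by linarith
      ultimately have "log b (b powr (49 / 4 * Z)) \<le> log b (1 + (s * L / 2) * P)"
        using b bp by (subst log_le_cancel_iff) auto
      then have "49 / 4 * Z \<le> log b (1 + (s * L / 2) * P)" using b by (simp add: log_powr_cancel)
      then show "Z \<le> rate b P pB L" using low[OF L4] by linarith
    qed
  qed
  show ?thesis using part1 part2 part3 by auto
qed

end
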